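(* Let $\mathcal{T}=(V,A,E,f,q,v_0)$ be a decorated rooted tree that has negative determinants and satisfies $f(A)\subseteq\mathbb{N}=\{0,1,2,\dots\}$. (a) If $v,v'\in V$ satisfy $v<v'$, then: (i) if $N_v<0$ then $N_{v'}<0$; (ii) if $N_v\le0$ then $N_{v'}\le0$; (iii) if $N_v\le0$ and there exists $\alpha\in A\setminus A_0$ with $\alpha>v'$, then $N_{v'}<0$. (b) The set $\{v\in V: N_v\ge0\}$ is connected. (c) The set $\{v\in V: N_v>0\}$ is connected.
   Context: A graph is a pair $(X_0,X_1)$ of finite sets such that each element of $X_1$ (an edge) is a $2$-element subset of $X_0$; elements of $X_0$ are cells. A path is a tuple $(x_0,\dots,x_n)$ ($n\ge0$) of cells with $\{x_i,x_{i+1}\}$ an edge for each $i<n$, these edges pairwise distinct; a cell/edge is in the path if it is some $x_i$ / some $\{x_i,x_{i+1}\}$. The graph is a tree if any two cells $x,y$ are joined by a unique path $\gamma_{x,y}$. A decorated tree is $(V,A,E,f,q)$ with $V$ (vertices), $A$ (arrows) finite disjoint sets, $(V\cup A,E)$ a tree, every arrow contained in exactly one edge, $f:A\to\mathbb{Z}$, $q(e,x)\in\mathbb{Z}$ for each $e\in E$, $x\in e$, with $q(e,\alpha)=1$ for $\alpha\in A$, and for each $v\in V$ and distinct edges $e,e'\ni v$, $\gcd(q(e,v),q(e',v))=1$. $A_0=\{\alpha\in A:f(\alpha)=0\}$. For $x\in V\cup A$, $e\ni x$: $Q(e,x)=\prod q(e',x)$ over edges $e'\ne e$ containing $x$ (empty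 product $=1$); for an edge $e=\{x,y\}$, $\det(e)=q(e,x)q(e,y)-Q(e,x)Q(e,y)$. An edge $\varepsilon$ is incident to a path $\gamma$ if it is not in $\gamma$ but contains a cell $u$ of $\gamma$; $q(\varepsilon,\gamma):=q(\varepsilon,u)$. For $v\ne\alpha$, $v\in V\cup A$, $\alpha\in A$: $x_{v,\alpha}=f(\alpha)\prod_\varepsilon q(\varepsilon,\gamma_{v,\alpha})$ over edges incident to $\gamma_{v,\alpha}$. For $v\in V\cup A_0$, $N_v=\sum_{\alpha\in A\setminus A_0}x_{v,\alpha}$. A root of $(V,A,E,f,q)$ is a vertex $v_0$ with $q(e,v_0)=1$ for every edge $e\ni v_0$ such that for every $v\in V\setminus\{v_0\}$, all edges $e\ni v$ not in $\gamma_{v_0,v}$ satisfy $q(e,v)\ge1$ and at most one of them satisfies $q(e,v)\ne1$. A decorated rooted tree is $(V,A,E,f,q,v_0)$ with $v_0$ a root. For distinct $x,y\in V\cup A$, $x<y$ means $x$ is in $\gamma_{v_0,y}$. $\mathcal{T}$ has negative determinants if $\det(e)<0$ for every edge $e=\{x,y\}$ with $x,y\in V$. A subset $S\subseteq V\cup A$ is connected if every path $(x_0,\dots,x_n)$ with $x_0,x_n\in S$ has $x_i\in S$ for all $0<i<n$. *)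

theory Defs
  imports Main
begin

definition graph :: "'a set \<Rightarrow> 'a set set \<Rightarrow> bool" where
  "graph X0 X1 \<longleftrightarrow> finite X0 \<and> finite X1 \<and> (\<forall>e\<in>X1. e \<subseteq> X0 \<and> card e = 2)"

text \<open>A path (x_0,...,x_n) is represented by a nonempty list; its edges are the
  sets {x_i, x_(i+1)}.\<close>
definition path_edge_list :: "'a list \<Rightarrow> 'a set list" where
  "path_edge_list xs = map (\<lambda>(a,b). {a,b}) (zip xs (tl xs))"

definition path_edges :: "'a list \<Rightarrow> 'a set set" where
  "path_edges xs = set (path_edge_list xs)"

definition is_path :: "'a set \<Rightarrow> 'a set set \<Rightarrow> 'a list \<Rightarrow> bool" where
  "is_path X0 X1 xs \<longleftrightarrow> xs \<noteq> [] \<and> set xs \<subseteq> X0 \<and>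
     set (path_edge_list xs) \<subseteq> X1 \<and> distinct (path_edge_list xs)"

definition is_tree :: "'a set \<Rightarrow> 'a set set \<Rightarrow> bool" where
  "is_tree X0 X1 \<longleftrightarrow> graph X0 X1 \<and>
     (\<forall>x\<in>X0. \<forall>y\<in>X0. \<exists>!xs. is_path X0 X1 xs \<and> hd xs = x \<and> last xs = y)"

definition tpath :: "'a set \<Rightarrow> 'a set set \<Rightarrow> 'a \<Rightarrow> 'a \<Rightarrow> 'a list" where
  "tpath X0 X1 x y = (THE xs. is_path X0 X1 xs \<and> hd xs = x \<and> last xs = y)"

definition connected_set :: "'a set \<Rightarrow> 'a set set \<Rightarrow> 'a set \<Rightarrow> bool" where
  "connected_set X0 X1 S \<longleftrightarrow>
     (\<forall>xs. is_path X0 X1 xs \<longrightarrow> hd xs \<in> S \<longrightarrow> last xs \<in> S \<longrightarrow> set xs \<subseteq> S)"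

definition decorated_tree ::
  "'a set \<Rightarrow> 'a set \<Rightarrow> 'a set set \<Rightarrow> ('a \<Rightarrow> int) \<Rightarrow> ('a set \<Rightarrow> 'a \<Rightarrow> int) \<Rightarrow> bool" where
  "decorated_tree V A E f q \<longleftrightarrow>
     finite V \<and> finite A \<and> V \<inter> A = {} \<and> is_tree (V \<union> A) E \<and>
     (\<forall>\<alpha>\<in>A. \<exists>!e. e \<in> E \<and> \<alpha> \<in> e) \<and>
     (\<forall>\<alpha>\<in>A. \<forall>e\<in>E. \<alpha> \<in> e \<longrightarrow> q e \<alpha> = 1) \<and>
     (\<forall>v\<in>V. \<forall>e\<in>E. \<forall>e'\<in>E. v \<in> e \<longrightarrow> v \<in> e' \<longrightarrow> e \<noteq> e' \<longrightarrow> gcd (q e v) (q e' v) = 1)"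

definition A0 :: "'a set \<Rightarrow> ('a \<Rightarrow> int) \<Rightarrow> 'a set" where
  "A0 A f = {\<alpha>\<in>A. f \<alpha> = 0}"

definition bigQ :: "'a set set \<Rightarrow> ('a set \<Rightarrow> 'a \<Rightarrow> int) \<Rightarrow> 'a set \<Rightarrow> 'a \<Rightarrow> int" where
  "bigQ E q e x = (\<Prod>e'\<in>{e'\<in>E. x \<in> e' \<and> e' \<noteq> e}. q e' x)"

definition edge_det :: "'a set set \<Rightarrow> ('a set \<Rightarrow> 'a \<Rightarrow> int) \<Rightarrow> 'a \<Rightarrow> 'a \<Rightarrow> int" where
  "edge_det E q x y = q {x,y} x * q {x,y} y - bigQ E q {x,y} x * bigQ E q {x,y} y"

definition incident_edges :: "'a set set \<Rightarrow> 'a list \<Rightarrow> 'a set set" where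
  "incident_edges E \<gamma> = {\<epsilon>\<in>E. \<epsilon> \<notin> path_edges \<gamma> \<and> (\<exists>u\<in>set \<gamma>. u \<in> \<epsilon>)}"

definition q_path :: "('a set \<Rightarrow> 'a \<Rightarrow> int) \<Rightarrow> 'a set \<Rightarrow> 'a list \<Rightarrow> int" where
  "q_path q \<epsilon> \<gamma> = q \<epsilon> (SOME u. u \<in> set \<gamma> \<and> u \<in> \<epsilon>)"

definition xval ::
  "'a set \<Rightarrow> 'a set \<Rightarrow> 'a set set \<Rightarrow> ('a \<Rightarrow> int) \<Rightarrow> ('a set \<Rightarrow> 'a \<Rightarrow> int) \<Rightarrow> 'a \<Rightarrow> 'a \<Rightarrow> int" where
  "xval V A E f q v \<alpha> =
     (let \<gamma> = tpath (V \<union> A) E v \<alpha> in f \<alpha> * (\<Prod>\<epsilon>\<in>incident_edges E \<gamma>. q_path q \<epsilon> \<gamma>))"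

definition Nval ::
  "'a set \<Rightarrow> 'a set \<Rightarrow> 'a set set \<Rightarrow> ('a \<Rightarrow> int) \<Rightarrow> ('a set \<Rightarrow> 'a \<Rightarrow> int) \<Rightarrow> 'a \<Rightarrow> int" where
  "Nval V A E f q v = (\<Sum>\<alpha>\<in>A - A0 A f. xval V A E f q v \<alpha>)"

definition is_root ::
  "'a set \<Rightarrow> 'a set \<Rightarrow> 'a set set \<Rightarrow> ('a set \<Rightarrow> 'a \<Rightarrow> int) \<Rightarrow> 'a \<Rightarrow> bool" where
  "is_root V A E q v0 \<longleftrightarrow> v0 \<in> V \<and> (\<forall>e\<in>E. v0 \<in> e \<longrightarrow> q e v0 = 1) \<and>
     (\<forall>v\<in>V - {v0}.
        (\<forall>e\<in>E. v \<in> e \<longrightarrow> e \<notin> path_edges (tpath (V \<union> A) E v0 v) \<longrightarrow> q e v \<ge> 1) \<and>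
        card {e\<in>E. v \<in> e \<and> e \<notin> path_edges (tpath (V \<union> A) E v0 v) \<and> q e v \<noteq> 1} \<le> 1)"

definition decorated_rooted_tree ::
  "'a set \<Rightarrow> 'a set \<Rightarrow> 'a set set \<Rightarrow> ('a \<Rightarrow> int) \<Rightarrow> ('a set \<Rightarrow> 'a \<Rightarrow> int) \<Rightarrow> 'a \<Rightarrow> bool" where
  "decorated_rooted_tree V A E f q v0 \<longleftrightarrow> decorated_tree V A E f q \<and> is_root V A E q v0"

definition tree_less :: "'a set \<Rightarrow> 'a set \<Rightarrow> 'a set set \<Rightarrow> 'a \<Rightarrow> 'a \<Rightarrow> 'a \<Rightarrow> bool" where
  "tree_less V A E v0 x y \<longleftrightarrow> x \<noteq> y \<and> x \<in> set (tpath (V \<union> A) E v0 y)"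

definition negative_determinants ::
  "'a set \<Rightarrow> 'a set set \<Rightarrow> ('a set \<Rightarrow> 'a \<Rightarrow> int) \<Rightarrow> bool" where
  "negative_determinants V E q \<longleftrightarrow> (\<forall>x\<in>V. \<forall>y\<in>V. {x,y} \<in> E \<longrightarrow> edge_det E q x y < 0)"

end

theory Submission
  imports Defs
begin

lemma pel_simps[simp]:
  "path_edge_list [] = []"
  "path_edge_list [x] = []"
  "path_edge_list (x # y # zs) = {x,y} # path_edge_list (y # zs)"
  by (simp_all add: path_edge_list_def)

lemma pel_subset: "\<epsilon> \<in> set (path_edge_list xs) \<Longrightarrow> \<epsilon> \<subseteq> set xs"
  by (induction xs rule: induct_list012) auto

lemma pel_append: "path_edge_list (xs @ ys) = path_edge_list xs @
   (if xs = [] \<or> ys = [] then [] else [{last xs, hd ys}]) @ path_edge_list ys"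
proof (induction xs rule: induct_list012)
  case (2 x)
  then show ?case by (cases ys) auto
qed auto

lemma pe_append: "path_edges (xs @ ys) = path_edges xs \<union> path_edges ys \<union>
   (if xs = [] \<or> ys = [] then {} else {{last xs, hd ys}})"
  by (simp add: path_edges_def pel_append)

lemma pe_subset: "\<epsilon> \<in> path_edges xs \<Longrightarrow> \<epsilon> \<subseteq> set xs"
  using pel_subset by (auto simp: path_edges_def)

lemma pe_Cons: "xs \<noteq> [] \<Longrightarrow> path_edges (x # xs) = insert {x, hd xs} (path_edges xs)"
  by (cases xs) (auto simp: path_edges_def)

locale tr =
  fixes T :: "'a set" and E :: "'a set set"
  assumes tree: "is_tree T E"
begin

definition tp :: "'a list \<Rightarrow> bool" where
  "tp xs \<longleftrightarrow> xs \<noteq> [] \<and> set xs \<subseteq> T \<and> successively (\<lambda>a b. {a,b} \<in> E) xs \<and> distinct xs"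

lemma graph: "graph T E" using tree by (simp add: is_tree_def)
lemma finE: "finite E" using graph by (simp add: graph_def)
lemma edge_card: "\<epsilon> \<in> E \<Longrightarrow> card \<epsilon> = 2" using graph by (simp add: graph_def)
lemma edge_sub: "\<epsilon> \<in> E \<Longrightarrow> \<epsilon> \<subseteq> T" using graph by (simp add: graph_def)
lemma edge_neq: "{a,b} \<in> E \<Longrightarrow> a \<noteq> b" using edge_card[of "{a,b}"] by auto

lemma path_succ: "set (path_edge_list xs) \<subseteq> E \<Longrightarrow> successively (\<lambda>a b. {a,b} \<in> E) xs"
  by (induction xs rule: induct_list012) auto

lemma succ_pel: "successively (\<lambda>a b. {a,b} \<in> E) xs \<Longrightarrow> set (path_edge_list xs) \<subseteq> E"
  by (induction xs rule: induct_list012) auto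

lemma distinct_pel: "distinct xs \<Longrightarrow> distinct (path_edge_list xs)"
  by (induction xs rule: induct_list012) (auto dest: pel_subset)

lemma is_path_sub: assumes p: "is_path T E (xs @ ys @ zs)" and ne: "ys \<noteq> []" shows "is_path T E ys"
proof -
  obtain X Y where eq: "path_edge_list (xs @ ys @ zs) = path_edge_list xs @ X @ path_edge_list ys @ Y @ path_edge_list zs"
    using pel_append[of xs "ys @ zs"] pel_append[of ys zs] by (metis append.assoc)
  have "distinct (path_edge_list ys)" using p unfolding is_path_def eq by simp
  moreover have "set (path_edge_list ys) \<subseteq> E" using p unfolding is_path_def eq by auto
  moreover have "set ys \<subseteq> T" using p unfolding is_path_def by auto
  ultimately show ?thesis using ne by (simp add: is_path_def)
qed

lemma tpath_unique: "is_path T E xs \<Longrightarrow> tpath T E (hd xs) (last xs) = xs"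
proof -
  assume p: "is_path T E xs"
  then have "hd xs \<in> T" "last xs \<in> T" by (auto simp: is_path_def)
  then have "\<exists>!ys. is_path T E ys \<and> hd ys = hd xs \<and> last ys = last xs"
    using tree by (auto simp: is_tree_def)
  then show ?thesis unfolding tpath_def by (rule the1_equality) (use p in auto)
qed

lemma tpath_props: "x \<in> T \<Longrightarrow> y \<in> T \<Longrightarrow>
   is_path T E (tpath T E x y) \<and> hd (tpath T E x y) = x \<and> last (tpath T E x y) = y"
proof -
  assume "x \<in> T" "y \<in> T"
  then have "\<exists>!ys. is_path T E ys \<and> hd ys = x \<and> last ys = y"
    using tree by (auto simp: is_tree_def)
  from theI'[OF this] show ?thesis unfolding tpath_def .
qed

lemma is_path_distinct: "is_path T E xs \<Longrightarrow> distinct xs"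
proof (rule ccontr)
  assume p: "is_path T E xs" and nd: "\<not> distinct xs"
  from not_distinct_decomp[OF nd] obtain as bs cs y where xs: "xs = as @ [y] @ bs @ [y] @ cs" by blast
  have p1: "is_path T E ([y] @ bs @ [y])" using is_path_sub[of as "[y] @ bs @ [y]" cs] p xs by simp
  then have "tpath T E y y = [y] @ bs @ [y]" using tpath_unique by fastforce
  moreover have "is_path T E [y]" using p1 by (auto simp: is_path_def)
  then have "tpath T E y y = [y]" using tpath_unique by fastforce
  ultimately show False by simp
qed

lemma is_path_tp: "is_path T E xs \<longleftrightarrow> tp xs"
proof
  assume p: "is_path T E xs"
  have "distinct xs" using is_path_distinct[OF p] .
  moreover have "successively (\<lambda>a b. {a,b} \<in> E) xs" using p path_succ by (simp add: is_path_def)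
  ultimately show "tp xs" using p by (simp add: tp_def is_path_def)
next
  assume t: "tp xs"
  then have "set (path_edge_list xs) \<subseteq> E" using succ_pel by (simp add: tp_def)
  moreover have "distinct (path_edge_list xs)" using t distinct_pel[of xs] by (simp add: tp_def)
  ultimately show "is_path T E xs" using t by (simp add: tp_def is_path_def)
qed

lemma tp_unique: "tp xs \<Longrightarrow> tpath T E (hd xs) (last xs) = xs"
  using tpath_unique is_path_tp by blast

lemma tp_tpath: assumes "x \<in> T" "y \<in> T"
  shows "tp (tpath T E x y)" "hd (tpath T E x y) = x" "last (tpath T E x y) = y"
  using tpath_props[OF assms] is_path_tp by auto

lemma tp_appendD: "tp (xs @ ys) \<Longrightarrow> xs \<noteq> [] \<Longrightarrow> tp xs" "tp (xs @ ys) \<Longrightarrow> ys \<noteq> [] \<Longrightarrow> tp ys"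
  by (auto simp: tp_def successively_append_iff)

lemma tp_append: "tp xs \<Longrightarrow> tp ys \<Longrightarrow> set xs \<inter> set ys = {} \<Longrightarrow> {last xs, hd ys} \<in> E \<Longrightarrow> tp (xs @ ys)"
  by (auto simp: tp_def successively_append_iff)

lemma tp_rev: "tp (rev xs) = tp xs"
  by (auto simp: tp_def insert_commute)

lemma tp_single: "x \<in> T \<Longrightarrow> tp [x]" by (simp add: tp_def)

lemma tp_edge: "{a,b} \<in> E \<Longrightarrow> tp [a,b]"
  using edge_sub edge_neq by (auto simp: tp_def)

lemma tp_T: "tp xs \<Longrightarrow> c \<in> set xs \<Longrightarrow> c \<in> T" by (auto simp: tp_def)

lemma tpath_rev: "x \<in> T \<Longrightarrow> y \<in> T \<Longrightarrow> tpath T E y x = rev (tpath T E x y)"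
  using tp_unique[of "rev (tpath T E x y)"] tp_tpath[of x y] tp_rev
  by (simp add: hd_rev last_rev)

lemma tp_chord: assumes "tp (P @ [a] @ M @ [b] @ S)" "{a,b} \<in> E" shows "M = []"
proof -
  have "tp ([a] @ M @ [b])" using assms(1) tp_appendD
    by (metis append.assoc append_is_Nil_conv not_Cons_self)
  then have "tpath T E a b = [a] @ M @ [b]" using tp_unique by fastforce
  moreover have "tpath T E a b = [a,b]" using tp_unique[OF tp_edge[OF assms(2)]] by simp
  ultimately show ?thesis by simp
qed

lemma pe_mid: "{a,b} \<in> path_edges (P @ a # b # S)"
proof -
  have "{a,b} \<in> path_edges (a # b # S)" by (simp add: path_edges_def)
  then show ?thesis using pe_append[of P "a # b # S"] by blast
qed

lemma incident_unique:
  assumes "tp \<gamma>" "\<epsilon> \<in> E" "\<epsilon> \<notin> path_edges \<gamma>" "a \<in> \<epsilon>" "b \<in> \<epsilon>" "a \<in> set \<gamma>" "b \<in> set \<gamma>"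
  shows "a = b"
proof (rule ccontr)
  assume ne: "a \<noteq> b"
  from card_2_iff[THEN iffD1, OF edge_card[OF assms(2)]] obtain x y where xy: "\<epsilon> = {x,y}" "x \<noteq> y" by blast
  have \<epsilon>: "\<epsilon> = {a,b}" using xy assms(4,5) ne by auto
  from split_list[OF assms(6)] obtain P R where g: "\<gamma> = P @ a # R" by blast
  have "b \<in> set P \<or> b \<in> set R" using assms(7) g ne by simp
  then show False
  proof
    assume "b \<in> set R"
    from split_list[OF this] obtain M S where R: "R = M @ b # S" by blast
    have t: "tp (P @ [a] @ M @ [b] @ S)" using assms(1) g R by simp
    have ab: "{a,b} \<in> E" using assms(2) \<epsilon> by simp
    have "M = []" using tp_chord[OF t ab] .
    then have "\<gamma> = P @ a # b # S" using g R by simp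
    then have "{a,b} \<in> path_edges \<gamma>" using pe_mid by simp
    then show False using assms(3) \<epsilon> by simp
  next
    assume "b \<in> set P"
    from split_list[OF this] obtain P1 M where P: "P = P1 @ b # M" by blast
    have t: "tp (P1 @ [b] @ M @ [a] @ R)" using assms(1) g P by simp
    have ab: "{b,a} \<in> E" using assms(2) \<epsilon> by (simp add: insert_commute)
    have "M = []" using tp_chord[OF t ab] .
    then have "\<gamma> = P1 @ b # a # R" using g P by simp
    then have "{b,a} \<in> path_edges \<gamma>" using pe_mid by simp
    then show False using assms(3) \<epsilon> by (simp add: insert_commute)
  qed
qed


end

definition Kc :: "'a set set \<Rightarrow> ('a set \<Rightarrow> 'a \<Rightarrow> int) \<Rightarrow> 'a list \<Rightarrow> 'a \<Rightarrow> int" where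
  "Kc E q \<gamma> c = (\<Prod>\<epsilon>\<in>{\<epsilon>\<in>E. c \<in> \<epsilon> \<and> \<epsilon> \<notin> path_edges \<gamma>}. q \<epsilon> c)"

definition Wt :: "'a set set \<Rightarrow> ('a set \<Rightarrow> 'a \<Rightarrow> int) \<Rightarrow> 'a list \<Rightarrow> int" where
  "Wt E q \<gamma> = (\<Prod>\<epsilon>\<in>incident_edges E \<gamma>. q_path q \<epsilon> \<gamma>)"

definition RR :: "'a set set \<Rightarrow> ('a set \<Rightarrow> 'a \<Rightarrow> int) \<Rightarrow> 'a \<Rightarrow> 'a list \<Rightarrow> int" where
  "RR E q x \<gamma> = (\<Prod>c\<in>set \<gamma>. Kc E q (x # \<gamma>) c)"

context tr
begin

lemma Wt_conv: assumes "tp \<gamma>" shows "Wt E q \<gamma> = (\<Prod>c\<in>set \<gamma>. Kc E q \<gamma> c)"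
proof -
  let ?A = "\<lambda>c. {\<epsilon>\<in>E. c \<in> \<epsilon> \<and> \<epsilon> \<notin> path_edges \<gamma>}"
  have inc: "incident_edges E \<gamma> = (\<Union>c\<in>set \<gamma>. ?A c)" by (auto simp: incident_edges_def)
  have disj: "\<forall>c\<in>set \<gamma>. \<forall>d\<in>set \<gamma>. c \<noteq> d \<longrightarrow> ?A c \<inter> ?A d = {}"
    using incident_unique[OF assms] by blast
  have "Wt E q \<gamma> = (\<Prod>c\<in>set \<gamma>. \<Prod>\<epsilon>\<in>?A c. q_path q \<epsilon> \<gamma>)"
    unfolding Wt_def inc by (rule prod.UNION_disjoint) (use finE disj in auto)
  also have "\<dots> = (\<Prod>c\<in>set \<gamma>. Kc E q \<gamma> c)"
  proof (rule prod.cong[OF refl])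
    fix c assume c: "c \<in> set \<gamma>"
    show "(\<Prod>\<epsilon>\<in>?A c. q_path q \<epsilon> \<gamma>) = Kc E q \<gamma> c" unfolding Kc_def
    proof (rule prod.cong[OF refl])
      fix \<epsilon> assume e: "\<epsilon> \<in> ?A c"
      have "(SOME u. u \<in> set \<gamma> \<and> u \<in> \<epsilon>) = c"
      proof (rule some_equality)
        show "c \<in> set \<gamma> \<and> c \<in> \<epsilon>" using c e by simp
        fix u assume "u \<in> set \<gamma> \<and> u \<in> \<epsilon>"
        then show "u = c" using incident_unique[OF assms, of \<epsilon> u c] c e by simp
      qed
      then show "q_path q \<epsilon> \<gamma> = q \<epsilon> c" by (simp add: q_path_def)
    qed
  qed
  finally show ?thesis .
qed

lemma tp_Cons: "tp \<gamma> \<Longrightarrow> x \<in> T \<Longrightarrow> x \<notin> set \<gamma> \<Longrightarrow> {x, hd \<gamma>} \<in> E \<Longrightarrow> tp (x # \<gamma>)"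
  by (cases \<gamma>) (auto simp: tp_def)

lemma factor:
  assumes tg: "tp \<gamma>" and xT: "x \<in> T" and xn: "x \<notin> set \<gamma>" and eE: "{x, hd \<gamma>} \<in> E"
  shows "Wt E q \<gamma> = q {x, hd \<gamma>} (hd \<gamma>) * RR E q x \<gamma>"
    and "Wt E q (x # \<gamma>) = bigQ E q {x, hd \<gamma>} x * RR E q x \<gamma>"
proof -
  let ?y = "hd \<gamma>" let ?e = "{x, hd \<gamma>}"
  have tp': "tp (x # \<gamma>)" using tp_Cons assms by blast
  have ne: "\<gamma> \<noteq> []" using tg by (simp add: tp_def)
  have pe': "path_edges (x # \<gamma>) = insert ?e (path_edges \<gamma>)" using pe_Cons[OF ne] .
  have xnot: "\<forall>\<epsilon>\<in>path_edges \<gamma>. x \<notin> \<epsilon>" using pe_subset xn by blast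
  have enot: "?e \<notin> path_edges \<gamma>" using xnot by auto
  have y: "?y \<in> set \<gamma>" using ne by simp
  have K1: "Kc E q \<gamma> c = Kc E q (x # \<gamma>) c" if "c \<in> set \<gamma>" "c \<noteq> ?y" for c
  proof -
    have "c \<notin> ?e" using that xn by auto
    then have "{\<epsilon>\<in>E. c \<in> \<epsilon> \<and> \<epsilon> \<notin> path_edges \<gamma>} = {\<epsilon>\<in>E. c \<in> \<epsilon> \<and> \<epsilon> \<notin> path_edges (x # \<gamma>)}"
      using pe' by auto
    then show ?thesis by (simp add: Kc_def)
  qed
  have K2: "Kc E q \<gamma> ?y = q ?e ?y * Kc E q (x # \<gamma>) ?y"
  proof -
    have s: "{\<epsilon>\<in>E. ?y \<in> \<epsilon> \<and> \<epsilon> \<notin> path_edges \<gamma>} = insert ?e {\<epsilon>\<in>E. ?y \<in> \<epsilon> \<and> \<epsilon> \<notin> path_edges (x # \<gamma>)}"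
      using pe' enot eE by auto
    have n: "?e \<notin> {\<epsilon>\<in>E. ?y \<in> \<epsilon> \<and> \<epsilon> \<notin> path_edges (x # \<gamma>)}" using pe' by auto
    have f: "finite {\<epsilon>\<in>E. ?y \<in> \<epsilon> \<and> \<epsilon> \<notin> path_edges (x # \<gamma>)}" using finE by simp
    show ?thesis unfolding Kc_def s using prod.insert[OF f n] by simp
  qed
  have K3: "Kc E q (x # \<gamma>) x = bigQ E q ?e x"
  proof -
    have "{\<epsilon>\<in>E. x \<in> \<epsilon> \<and> \<epsilon> \<notin> path_edges (x # \<gamma>)} = {e'\<in>E. x \<in> e' \<and> e' \<noteq> ?e}"
      using pe' xnot by auto
    then show ?thesis by (simp add: Kc_def bigQ_def)
  qed
  have R: "RR E q x \<gamma> = Kc E q (x # \<gamma>) ?y * (\<Prod>c\<in>set \<gamma> - {?y}. Kc E q (x # \<gamma>) c)"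
    unfolding RR_def using y by (simp add: prod.remove)
  have "Wt E q \<gamma> = (\<Prod>c\<in>set \<gamma>. Kc E q \<gamma> c)" using Wt_conv[OF tg] .
  also have "\<dots> = Kc E q \<gamma> ?y * (\<Prod>c\<in>set \<gamma> - {?y}. Kc E q \<gamma> c)" using y by (simp add: prod.remove)
  also have "(\<Prod>c\<in>set \<gamma> - {?y}. Kc E q \<gamma> c) = (\<Prod>c\<in>set \<gamma> - {?y}. Kc E q (x # \<gamma>) c)"
    using K1 by (intro prod.cong) auto
  finally show "Wt E q \<gamma> = q ?e ?y * RR E q x \<gamma>" unfolding R K2 by (simp add: mult.assoc)
  have "Wt E q (x # \<gamma>) = (\<Prod>c\<in>set (x # \<gamma>). Kc E q (x # \<gamma>) c)" using Wt_conv[OF tp'] .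
  also have "\<dots> = Kc E q (x # \<gamma>) x * RR E q x \<gamma>" using xn by (simp add: RR_def)
  finally show "Wt E q (x # \<gamma>) = bigQ E q ?e x * RR E q x \<gamma>" unfolding K3 .
qed

end

lemma hd_snoc_mid: "hd (xs @ [c]) = hd (xs @ c # ys)" by (cases xs) auto

locale dt = tr "V \<union> A" E for V A :: "'a set" and E :: "'a set set" +
  fixes f :: "'a \<Rightarrow> int" and q :: "'a set \<Rightarrow> 'a \<Rightarrow> int" and v0 :: 'a
  assumes drt: "decorated_rooted_tree V A E f q v0"
    and ndet: "negative_determinants V E q"
    and fnn: "\<forall>\<alpha>\<in>A. f \<alpha> \<ge> 0"
begin

abbreviation N where "N v \<equiv> Nval V A E f q v"
abbreviation tpa where "tpa x y \<equiv> tpath (V \<union> A) E x y"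

lemma VA: "V \<inter> A = {}" "finite A" using drt by (auto simp: decorated_rooted_tree_def decorated_tree_def)
lemma v0V: "v0 \<in> V" using drt by (auto simp: decorated_rooted_tree_def is_root_def)
lemma root1: "e \<in> E \<Longrightarrow> v0 \<in> e \<Longrightarrow> q e v0 = 1"
  using drt by (auto simp: decorated_rooted_tree_def is_root_def)
lemma root2: "v \<in> V \<Longrightarrow> v \<noteq> v0 \<Longrightarrow> e \<in> E \<Longrightarrow> v \<in> e \<Longrightarrow> e \<notin> path_edges (tpa v0 v) \<Longrightarrow> q e v \<ge> 1"
  using drt unfolding decorated_rooted_tree_def is_root_def by blast
lemma arrq: "\<alpha> \<in> A \<Longrightarrow> e \<in> E \<Longrightarrow> \<alpha> \<in> e \<Longrightarrow> q e \<alpha> = 1"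
  using drt by (auto simp: decorated_rooted_tree_def decorated_tree_def)
lemma arr1: "\<alpha> \<in> A \<Longrightarrow> \<exists>!e. e \<in> E \<and> \<alpha> \<in> e"
  using drt by (auto simp: decorated_rooted_tree_def decorated_tree_def)
lemma xval_Wt: "xval V A E f q v \<alpha> = f \<alpha> * Wt E q (tpa v \<alpha>)"
  by (simp add: xval_def Wt_def Let_def)

lemma all_in_V: assumes tx: "tp xs" and h: "hd xs \<in> V" and l: "last xs \<in> V" shows "set xs \<subseteq> V"
proof
  fix c assume c: "c \<in> set xs"
  show "c \<in> V"
  proof (rule ccontr)
    assume cV: "c \<notin> V"
    then have cA: "c \<in> A" using tp_T[OF tx c] by simp
    from split_list[OF c] obtain P S where xs: "xs = P @ c # S" by blast
    have P: "P \<noteq> []" using h cV xs by auto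
    have S: "S \<noteq> []" using l cV xs by auto
    have succ: "successively (\<lambda>a b. {a,b} \<in> E) (P @ c # S)" and dist: "distinct (P @ c # S)"
      using tx xs by (auto simp: tp_def)
    have e1: "{last P, c} \<in> E" using succ P by (simp add: successively_append_iff)
    have e2: "{c, hd S} \<in> E" using succ S by (cases S) (auto simp: successively_append_iff)
    have n1: "last P \<noteq> hd S" using dist P S by (metis disjoint_iff distinct_append hd_in_set last_in_set list.set_intros(2))
    have n2: "last P \<noteq> c" using dist P by auto
    have "{last P, c} \<noteq> {c, hd S}" using n1 n2 by (auto simp: doubleton_eq_iff)
    with arr1[OF cA] e1 e2 show False by auto
  qed
qed

lemma step:
  assumes uV: "u \<in> V" and wV: "w \<in> V" and pw: "tpa v0 w = tpa v0 u @ [w]"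
  shows "(N u < 0 \<longrightarrow> N w < 0) \<and> (N u \<le> 0 \<longrightarrow> N w \<le> 0) \<and>
         (N u \<le> 0 \<and> (\<exists>\<alpha>\<in>A - A0 A f. w \<in> set (tpa v0 \<alpha>)) \<longrightarrow> N w < 0)"
proof -
  define e where "e = {u,w}"
  have v0T: "v0 \<in> V \<union> A" using v0V by simp
  have uT: "u \<in> V \<union> A" and wT: "w \<in> V \<union> A" using uV wV by auto
  have tpw: "tp (tpa v0 u @ [w])" using tp_tpath(1)[OF v0T wT] pw by simp
  have tpu: "tp (tpa v0 u)" using tp_tpath(1)[OF v0T uT] .
  have lu: "last (tpa v0 u) = u" and hu: "hd (tpa v0 u) = v0" using tp_tpath[OF v0T uT] by auto
  have neu: "tpa v0 u \<noteq> []" using tpu by (simp add: tp_def)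
  have eE: "e \<in> E" using tpw lu neu by (simp add: tp_def successively_append_iff e_def)
  have uw: "u \<noteq> w" using edge_neq eE e_def by blast
  have wnot: "w \<notin> set (tpa v0 u)" using tpw by (simp add: tp_def)
  have v0in: "v0 \<in> set (tpa v0 u)" using hu neu hd_in_set by metis
  have wv0: "w \<noteq> v0" using wnot v0in by auto
  have uin: "u \<in> set (tpa v0 u)" using lu neu last_in_set by metis
  have SwF: "tpa u \<alpha> = u # tpa w \<alpha>" if aT: "\<alpha> \<in> V \<union> A" and un: "u \<notin> set (tpa w \<alpha>)" for \<alpha>
  proof -
    have tg: "tp (tpa w \<alpha>)" and hg: "hd (tpa w \<alpha>) = w" and lg: "last (tpa w \<alpha>) = \<alpha>"
      using tp_tpath[OF wT aT] by auto
    have ng: "tpa w \<alpha> \<noteq> []" using tg by (simp add: tp_def)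
    have "tp (u # tpa w \<alpha>)" using tp_Cons[OF tg uT un] eE e_def hg by simp
    then show ?thesis using tp_unique[of "u # tpa w \<alpha>"] lg ng by simp
  qed
  have SuF: "tpa w \<alpha> = w # tpa u \<alpha> \<and> w \<notin> set (tpa u \<alpha>)" if aT: "\<alpha> \<in> V \<union> A" and ui: "u \<in> set (tpa w \<alpha>)" for \<alpha>
  proof -
    have tg: "tp (tpa w \<alpha>)" and hg: "hd (tpa w \<alpha>) = w" and lg: "last (tpa w \<alpha>) = \<alpha>"
      using tp_tpath[OF wT aT] by auto
    from split_list[OF ui] obtain P S where g: "tpa w \<alpha> = P @ u # S" by blast
    have P: "P \<noteq> []" using hg g uw by auto
    have t1: "tp (P @ [u])" using tp_appendD(1)[of "P @ [u]" S] tg g by simp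
    have "tpath (V \<union> A) E w u = P @ [u]" using tp_unique[OF t1] hg g P by simp
    moreover have "tpath (V \<union> A) E w u = [w,u]" using tp_unique[OF tp_edge[of w u]] eE e_def
      by (simp add: insert_commute)
    ultimately have P1: "P = [w]" by simp
    have t2: "tp (u # S)" using tp_appendD(2)[of P "u # S"] tg g by simp
    have "tpa u \<alpha> = u # S" using tp_unique[OF t2] lg g P by simp
    then have eq: "tpa w \<alpha> = w # tpa u \<alpha>" using g P1 by simp
    moreover have "w \<notin> set (tpa u \<alpha>)" using tg eq by (simp add: tp_def)
    ultimately show ?thesis by simp
  qed
  have D: "tp (tpa v0 u @ tpa w \<alpha>)" if aT: "\<alpha> \<in> V \<union> A" and un: "u \<notin> set (tpa w \<alpha>)" for \<alpha>
  proof -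
    have tg: "tp (tpa w \<alpha>)" and hg: "hd (tpa w \<alpha>) = w" and lg: "last (tpa w \<alpha>) = \<alpha>"
      using tp_tpath[OF wT aT] by auto
    have disj: "set (tpa v0 u) \<inter> set (tpa w \<alpha>) = {}"
    proof (rule ccontr)
      assume "set (tpa v0 u) \<inter> set (tpa w \<alpha>) \<noteq> {}"
      then obtain c where c1: "c \<in> set (tpa v0 u)" and c2: "c \<in> set (tpa w \<alpha>)" by blast
      from split_list[OF c1] obtain P1 P2 where p: "tpa v0 u = P1 @ c # P2" by blast
      have "tp (P1 @ (c # P2 @ [w]))" using tpw p by simp
      then have t1: "tp (c # P2 @ [w])" using tp_appendD(2) by blast
      have cT: "c \<in> V \<union> A" using tp_T[OF tpu c1] .
      have cw: "tpath (V \<union> A) E c w = c # P2 @ [w]" using tp_unique[OF t1] by simp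
      have "u = last (c # P2)" using lu p by simp
      then have "u \<in> set (c # P2)" using last_in_set by (metis list.distinct(1))
      then have u1: "u \<in> set (tpath (V \<union> A) E c w)" using cw by auto
      from split_list[OF c2] obtain G1 G2 where g: "tpa w \<alpha> = G1 @ c # G2" by blast
      have t2: "tp (G1 @ [c])" using tp_appendD(1)[of "G1 @ [c]" G2] tg g by simp
      have "hd (G1 @ [c]) = w" using hg g hd_snoc_mid by metis
      then have wc: "tpath (V \<union> A) E w c = G1 @ [c]" using tp_unique[OF t2] by simp
      have "tpath (V \<union> A) E c w = rev (G1 @ [c])" using tpath_rev[OF wT cT] wc by simp
      then have "u \<in> set (G1 @ [c])" using u1 by simp
      then show False using un g by auto
    qed
    show ?thesis using tp_append[OF tpu tg disj] lu hg eE e_def by simp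
  qed
  have POS: "RR E q u (tpa w \<alpha>) \<ge> 1" if aT: "\<alpha> \<in> V \<union> A" and un: "u \<notin> set (tpa w \<alpha>)" for \<alpha>
    unfolding RR_def
  proof (rule prod_ge_1)
    fix c assume c: "c \<in> set (tpa w \<alpha>)"
    have tg: "tp (tpa w \<alpha>)" and hg: "hd (tpa w \<alpha>) = w" and lg: "last (tpa w \<alpha>) = \<alpha>"
      using tp_tpath[OF wT aT] by auto
    have ng: "tpa w \<alpha> \<noteq> []" using tg by (simp add: tp_def)
    show "1 \<le> Kc E q (u # tpa w \<alpha>) c" unfolding Kc_def
    proof (rule prod_ge_1)
      fix \<epsilon> assume "\<epsilon> \<in> {\<epsilon> \<in> E. c \<in> \<epsilon> \<and> \<epsilon> \<notin> path_edges (u # tpa w \<alpha>)}"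
      then have eps: "\<epsilon> \<in> E" "c \<in> \<epsilon>" "\<epsilon> \<notin> path_edges (u # tpa w \<alpha>)" by auto
      have cT: "c \<in> V \<union> A" using tp_T[OF tg c] .
      show "1 \<le> q \<epsilon> c"
      proof (cases "c \<in> A")
        case True
        then show ?thesis using arrq eps by simp
      next
        case False
        then have cV: "c \<in> V" using cT by simp
        have DD: "tp (tpa v0 u @ tpa w \<alpha>)" using D[OF aT un] .
        from split_list[OF c] obtain G1 G2 where g: "tpa w \<alpha> = G1 @ c # G2" by blast
        define L where "L = tpa v0 u @ G1"
        have tL: "tp (L @ [c])" using tp_appendD(1)[of "L @ [c]" G2] DD g L_def by simp
        have hL: "hd (L @ [c]) = v0" using hu neu L_def by simp
        have pc: "tpa v0 c = L @ [c]" using tp_unique[OF tL] hL by simp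
        have cnL: "c \<notin> set L" using tL by (simp add: tp_def)
        have cv0: "c \<noteq> v0" using cnL v0in L_def by auto
        have neL: "L \<noteq> []" using neu L_def by simp
        have "\<epsilon> \<notin> path_edges (L @ [c])"
        proof
          assume "\<epsilon> \<in> path_edges (L @ [c])"
          moreover have "path_edges (L @ [c]) = path_edges L \<union> {{last L, c}}"
            using pe_append[of L "[c]"] neL by (simp add: path_edges_def)
          ultimately have "\<epsilon> \<in> path_edges L \<or> \<epsilon> = {last L, c}" by auto
          then show False
          proof
            assume "\<epsilon> \<in> path_edges L"
            then show False using pe_subset eps(2) cnL by blast
          next
            assume el: "\<epsilon> = {last L, c}"
            have pg: "path_edges (tpa w \<alpha>) \<subseteq> path_edges (u # tpa w \<alpha>)" using pe_Cons[OF ng] by auto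
            show False
            proof (cases "G1 = []")
              case True
              then have "c = w" using g hg by simp
              moreover have "last L = u" using True L_def lu by simp
              ultimately have "\<epsilon> = {u, hd (tpa w \<alpha>)}" using el hg by simp
              then show False using eps(3) pe_Cons[OF ng] by simp
            next
              case False
              then have "last L = last G1" using L_def by simp
              then have "\<epsilon> \<in> path_edges (G1 @ c # G2)" using el False by (simp add: pe_append)
              then show False using g pg eps(3) by auto
            qed
          qed
        qed
        then show ?thesis using root2[OF cV cv0 eps(1,2)] pc by simp
      qed
    qed
  qed
  have SwA: "u \<notin> set (tpa w \<alpha>)" if aA: "\<alpha> \<in> A" and wi: "w \<in> set (tpa v0 \<alpha>)" for \<alpha>
  proof -
    have aT: "\<alpha> \<in> V \<union> A" using aA by simp
    have tg: "tp (tpa v0 \<alpha>)" and hg: "hd (tpa v0 \<alpha>) = v0" and lg: "last (tpa v0 \<alpha>) = \<alpha>"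
      using tp_tpath[OF v0T aT] by auto
    from split_list[OF wi] obtain X Y where g: "tpa v0 \<alpha> = X @ w # Y" by blast
    have X: "X \<noteq> []" using hg g wv0 by auto
    have t1: "tp (X @ [w])" using tp_appendD(1)[of "X @ [w]" Y] tg g by simp
    have "hd (X @ [w]) = v0" using hg g hd_snoc_mid by metis
    then have "tpa v0 w = X @ [w]" using tp_unique[OF t1] by simp
    then have X1: "X = tpa v0 u" using pw by simp
    have t2: "tp (w # Y)" using tp_appendD(2)[of X "w # Y"] tg g by simp
    have "tpa w \<alpha> = w # Y" using tp_unique[OF t2] lg g by simp
    moreover have "distinct (X @ w # Y)" using tg g by (simp add: tp_def)
    ultimately show ?thesis using uin X1 by auto
  qed
  define Sw where "Sw = {\<alpha>. u \<notin> set (tpa w \<alpha>)}"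
  define A' where "A' = A - A0 A f"
  define r where "r \<alpha> = f \<alpha> * RR E q u (tpa w \<alpha>)" for \<alpha>
  define p where "p \<alpha> = f \<alpha> * RR E q w (tpa u \<alpha>)" for \<alpha>
  have xS: "xval V A E f q u \<alpha> = bigQ E q e u * r \<alpha> \<and> xval V A E f q w \<alpha> = q e w * r \<alpha>"
    if aA: "\<alpha> \<in> A" and aS: "\<alpha> \<in> Sw" for \<alpha>
  proof -
    have aT: "\<alpha> \<in> V \<union> A" using aA by simp
    have un: "u \<notin> set (tpa w \<alpha>)" using aS Sw_def by simp
    have tg: "tp (tpa w \<alpha>)" and hg: "hd (tpa w \<alpha>) = w" using tp_tpath[OF wT aT] by auto
    have e': "{u, hd (tpa w \<alpha>)} = e" using hg e_def by simp
    have f1: "Wt E q (tpa w \<alpha>) = q e w * RR E q u (tpa w \<alpha>)"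
      using factor(1)[OF tg uT un] eE e' hg by simp
    have f2: "Wt E q (u # tpa w \<alpha>) = bigQ E q e u * RR E q u (tpa w \<alpha>)"
      using factor(2)[OF tg uT un] eE e' by simp
    show ?thesis using f1 f2 SwF[OF aT un] by (simp add: xval_Wt r_def)
  qed
  have xP: "xval V A E f q u \<alpha> = q e u * p \<alpha> \<and> xval V A E f q w \<alpha> = bigQ E q e w * p \<alpha>"
    if aA: "\<alpha> \<in> A" and aS: "\<alpha> \<notin> Sw" for \<alpha>
  proof -
    have aT: "\<alpha> \<in> V \<union> A" using aA by simp
    have ui: "u \<in> set (tpa w \<alpha>)" using aS Sw_def by simp
    have s: "tpa w \<alpha> = w # tpa u \<alpha>" and wn: "w \<notin> set (tpa u \<alpha>)" using SuF[OF aT ui] by auto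
    have tg: "tp (tpa u \<alpha>)" and hg: "hd (tpa u \<alpha>) = u" using tp_tpath[OF uT aT] by auto
    have e': "{w, hd (tpa u \<alpha>)} = e" using hg e_def by (simp add: insert_commute)
    have f1: "Wt E q (tpa u \<alpha>) = q e u * RR E q w (tpa u \<alpha>)"
      using factor(1)[OF tg wT wn] eE e' hg by simp
    have f2: "Wt E q (w # tpa u \<alpha>) = bigQ E q e w * RR E q w (tpa u \<alpha>)"
      using factor(2)[OF tg wT wn] eE e' by simp
    show ?thesis using f1 f2 s by (simp add: xval_Wt p_def)
  qed
  define R where "R = (\<Sum>\<alpha>\<in>A' \<inter> Sw. r \<alpha>)"
  define P where "P = (\<Sum>\<alpha>\<in>A' - Sw. p \<alpha>)"
  have finA': "finite A'" using VA(2) A'_def by simp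
  have A'A: "A' \<subseteq> A" using A'_def by auto
  have Nu: "N u = bigQ E q e u * R + q e u * P"
  proof -
    have "N u = (\<Sum>\<alpha>\<in>A'. xval V A E f q u \<alpha>)" by (simp add: Nval_def A'_def)
    also have "\<dots> = (\<Sum>\<alpha>\<in>A' \<inter> Sw. xval V A E f q u \<alpha>) + (\<Sum>\<alpha>\<in>A' - Sw. xval V A E f q u \<alpha>)"
      using sum.Int_Diff[OF finA'] by blast
    also have "(\<Sum>\<alpha>\<in>A' \<inter> Sw. xval V A E f q u \<alpha>) = (\<Sum>\<alpha>\<in>A' \<inter> Sw. bigQ E q e u * r \<alpha>)"
      using xS A'A by (intro sum.cong) auto
    also have "(\<Sum>\<alpha>\<in>A' - Sw. xval V A E f q u \<alpha>) = (\<Sum>\<alpha>\<in>A' - Sw. q e u * p \<alpha>)"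
      using xP A'A by (intro sum.cong) auto
    finally show ?thesis by (simp add: R_def P_def sum_distrib_left)
  qed
  have Nw: "N w = q e w * R + bigQ E q e w * P"
  proof -
    have "N w = (\<Sum>\<alpha>\<in>A'. xval V A E f q w \<alpha>)" by (simp add: Nval_def A'_def)
    also have "\<dots> = (\<Sum>\<alpha>\<in>A' \<inter> Sw. xval V A E f q w \<alpha>) + (\<Sum>\<alpha>\<in>A' - Sw. xval V A E f q w \<alpha>)"
      using sum.Int_Diff[OF finA'] by blast
    also have "(\<Sum>\<alpha>\<in>A' \<inter> Sw. xval V A E f q w \<alpha>) = (\<Sum>\<alpha>\<in>A' \<inter> Sw. q e w * r \<alpha>)"
      using xS A'A by (intro sum.cong) auto
    also have "(\<Sum>\<alpha>\<in>A' - Sw. xval V A E f q w \<alpha>) = (\<Sum>\<alpha>\<in>A' - Sw. bigQ E q e w * p \<alpha>)"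
      using xP A'A by (intro sum.cong) auto
    finally show ?thesis by (simp add: R_def P_def sum_distrib_left)
  qed
  have rnn: "r \<alpha> \<ge> 0" if "\<alpha> \<in> A' \<inter> Sw" for \<alpha>
  proof -
    have "\<alpha> \<in> A" "u \<notin> set (tpa w \<alpha>)" using that A'_def Sw_def by auto
    then have "RR E q u (tpa w \<alpha>) \<ge> 1" "f \<alpha> \<ge> 0" using POS fnn by auto
    then show ?thesis by (simp add: r_def)
  qed
  have Rnn: "R \<ge> 0" unfolding R_def using rnn by (intro sum_nonneg) blast
  have qu: "q e u \<ge> 1"
  proof (cases "u = v0")
    case True
    then show ?thesis using root1 eE e_def by simp
  next
    case False
    have "e \<notin> path_edges (tpa v0 u)" using pe_subset wnot e_def by blast
    then show ?thesis using root2[OF uV False eE] e_def by simp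
  qed
  have Qw: "bigQ E q e w \<ge> 1" unfolding bigQ_def
  proof (rule prod_ge_1)
    fix e' assume "e' \<in> {e' \<in> E. w \<in> e' \<and> e' \<noteq> e}"
    then have e': "e' \<in> E" "w \<in> e'" "e' \<noteq> e" by auto
    have "path_edges (tpa v0 w) = path_edges (tpa v0 u) \<union> {{u, w}}"
      using pw neu lu pe_append[of "tpa v0 u" "[w]"] by (simp add: path_edges_def)
    moreover have "e' \<notin> path_edges (tpa v0 u)" using pe_subset wnot e'(2) by blast
    ultimately have "e' \<notin> path_edges (tpa v0 w)" using e'(3) e_def by auto
    then show "1 \<le> q e' w" using root2[OF wV wv0 e'(1,2)] by simp
  qed
  have det: "q e u * q e w - bigQ E q e u * bigQ E q e w < 0"
    using ndet uV wV eE e_def by (auto simp: negative_determinants_def edge_det_def)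
  define a where "a = q e u"
  define b where "b = q e w"
  define c where "c = bigQ E q e u"
  define d where "d = bigQ E q e w"
  have id: "a * N w = d * N u + R * (a * b - c * d)"
    by (simp add: Nu Nw a_def b_def c_def d_def algebra_simps)
  have a1: "a \<ge> 1" and d1: "d \<ge> 1" and dt: "a * b - c * d < 0" using qu Qw det a_def b_def c_def d_def by auto
  have t1: "R * (a * b - c * d) \<le> 0" using Rnn dt by (simp add: mult_nonneg_nonpos)
  have aneg: "N w < 0" if "a * N w < 0" using a1 that by (metis not_le zero_le_mult_iff order.trans zero_le_one)
  have anp: "N w \<le> 0" if "a * N w \<le> 0" using a1 that by (metis not_le mult_pos_pos order.strict_trans2 zero_less_one)
  have i1: "N u < 0 \<longrightarrow> N w < 0"
  proof
    assume "N u < 0"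
    then have "d * N u < 0" using d1 by (simp add: mult_pos_neg)
    then show "N w < 0" using id t1 aneg by linarith
  qed
  have i2: "N u \<le> 0 \<longrightarrow> N w \<le> 0"
  proof
    assume "N u \<le> 0"
    then have "d * N u \<le> 0" using d1 by (simp add: mult_nonneg_nonpos)
    then show "N w \<le> 0" using id t1 anp by linarith
  qed
  have i3: "N u \<le> 0 \<and> (\<exists>\<alpha>\<in>A - A0 A f. w \<in> set (tpa v0 \<alpha>)) \<longrightarrow> N w < 0"
  proof
    assume H: "N u \<le> 0 \<and> (\<exists>\<alpha>\<in>A - A0 A f. w \<in> set (tpa v0 \<alpha>))"
    then obtain \<alpha> where aA': "\<alpha> \<in> A'" and wi: "w \<in> set (tpa v0 \<alpha>)" using A'_def by blast
    have aA: "\<alpha> \<in> A" using aA' A'A by auto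
    have aS: "\<alpha> \<in> Sw" using SwA[OF aA wi] Sw_def by simp
    have "f \<alpha> \<noteq> 0" using aA' by (simp add: A'_def A0_def)
    then have f1: "f \<alpha> \<ge> 1" using fnn aA by fastforce
    have "RR E q u (tpa w \<alpha>) \<ge> 1" using POS aA aS Sw_def by simp
    then have "r \<alpha> \<ge> 1" using f1 r_def by (metis mult_mono' one_le_mult_iff zero_le_one order.trans mult_le_cancel_left1 not_le)
    moreover have "r \<alpha> \<le> R" unfolding R_def
      using member_le_sum[of \<alpha> "A' \<inter> Sw" r] rnn aA' aS finA' by simp
    ultimately have "R > 0" by simp
    then have "R * (a * b - c * d) < 0" using dt by (simp add: mult_pos_neg)
    moreover have "d * N u \<le> 0" using H d1 by (simp add: mult_nonneg_nonpos)
    ultimately show "N w < 0" using id aneg by linarith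
  qed
  show ?thesis using i1 i2 i3 by blast
qed

end

context tr
begin

lemma tp_prefix: assumes tx: "tp xs" and n: "n < length xs"
  shows "tpath T E (hd xs) (xs ! n) = take (Suc n) xs"
proof -
  have ne: "xs \<noteq> []" using tx by (simp add: tp_def)
  have t: "tp (take (Suc n) xs)" using tp_appendD(1)[of "take (Suc n) xs" "drop (Suc n) xs"] tx ne by simp
  have "last (take (Suc n) xs) = xs ! n" using take_Suc_conv_app_nth[OF n] by simp
  moreover have "hd (take (Suc n) xs) = hd xs" by simp
  ultimately show ?thesis using tp_unique[OF t] by simp
qed

lemma half:
  assumes tx: "tp (P @ c # S)" and S: "S \<noteq> []" and v0T: "v0 \<in> T"
    and G: "tpath T E v0 c = G @ [p, c]" and hp: "hd S \<noteq> p"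
  shows "c \<in> set (tpath T E v0 (last S))"
proof -
  have cT: "c \<in> T" using tp_T[OF tx] by simp
  have tc: "tp (G @ [p, c])" using tp_tpath(1)[OF v0T cT] G by simp
  have hc: "hd (G @ [p, c]) = v0" using tp_tpath(2)[OF v0T cT] G by simp
  have tS: "tp S" using tp_appendD(2)[of "P @ [c]" S] tx S by simp
  have dist: "distinct (P @ c # S)" using tx by (simp add: tp_def)
  have disj: "set (G @ [p, c]) \<inter> set S = {}"
  proof (rule ccontr)
    assume "set (G @ [p, c]) \<inter> set S \<noteq> {}"
    then obtain d where d1: "d \<in> set (G @ [p, c])" and d2: "d \<in> set S" by blast
    have dc: "d \<noteq> c" using dist d2 by auto
    then have "d \<in> set (G @ [p])" using d1 by auto
    from split_list[OF this] obtain D1 D2 where gd: "G @ [p] = D1 @ d # D2" by blast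
    have g2: "G @ [p, c] = D1 @ d # D2 @ [c]" using gd by (metis append.assoc append_Cons append_Nil)
    have t1: "tp (d # D2 @ [c])" using tp_appendD(2)[of D1 "d # D2 @ [c]"] tc g2 by simp
    have dT: "d \<in> T" using tp_T[OF tS d2] .
    have p1: "tpath T E d c = d # D2 @ [c]" using tp_unique[OF t1] by simp
    have lp: "last (d # D2) = p" using gd by (metis last_appendR last_snoc list.distinct(1))
    from split_list[OF d2] obtain S1 S2 where sd: "S = S1 @ d # S2" by blast
    have "P @ c # S = (P @ (c # S1 @ [d])) @ S2" using sd by simp
    then have "tp (P @ (c # S1 @ [d]))" using tp_appendD(1) tx by (metis append_is_Nil_conv list.distinct(1))
    then have t2: "tp (c # S1 @ [d])" using tp_appendD(2) by blast
    have "tpath T E c d = c # S1 @ [d]" using tp_unique[OF t2] by simp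
    then have "tpath T E d c = d # rev S1 @ [c]" using tpath_rev[OF cT dT] by simp
    then have D2: "D2 = rev S1" using p1 by simp
    have "hd S = p"
    proof (cases "S1 = []")
      case True
      then show ?thesis using sd lp D2 by simp
    next
      case False
      then have "last (d # D2) = hd S1" using D2 by (simp add: last_rev)
      then show ?thesis using sd lp False by simp
    qed
    then show False using hp by simp
  qed
  have "successively (\<lambda>a b. {a,b} \<in> E) (c # S)"
    using tx by (simp add: tp_def successively_append_iff)
  then have link: "{c, hd S} \<in> E" using S by (cases S) auto
  have t3: "tp (G @ [p, c] @ S)" using tp_append[OF tc tS disj] link by simp
  have hc3: "hd (G @ [p, c] @ S) = v0" using hc by (cases G) auto
  have "tpath T E v0 (last S) = G @ [p, c] @ S" using tp_unique[OF t3] hc3 S by simp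
  then show ?thesis by simp
qed

lemma interior:
  assumes tx: "tp xs" and c: "c \<in> set xs" and ch: "c \<noteq> hd xs" and cl: "c \<noteq> last xs" and v0T: "v0 \<in> T"
  shows "c \<in> set (tpath T E v0 (hd xs)) \<or> c \<in> set (tpath T E v0 (last xs))"
proof (cases "c = v0")
  case True
  have ne: "xs \<noteq> []" using tx by (simp add: tp_def)
  have hT: "hd xs \<in> T" using tp_T[OF tx] ne by simp
  have "hd (tpath T E v0 (hd xs)) = v0" "tp (tpath T E v0 (hd xs))" using tp_tpath[OF v0T hT] by auto
  then have "v0 \<in> set (tpath T E v0 (hd xs))" by (metis hd_in_set tp_def)
  then show ?thesis using True by simp
next
  case False
  have cT: "c \<in> T" using tp_T[OF tx c] .
  define L where "L = tpath T E v0 c"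
  have tL: "tp L" and hL: "hd L = v0" and lL: "last L = c" using tp_tpath[OF v0T cT] L_def by auto
  have neL: "L \<noteq> []" using tL by (simp add: tp_def)
  define B where "B = butlast L"
  have LB: "L = B @ [c]" using neL lL B_def by (metis append_butlast_last_id)
  have neB: "B \<noteq> []" using LB hL False by auto
  have "B = butlast B @ [last B]" using neB by simp
  then have LG: "tpath T E v0 c = butlast B @ [last B, c]" using LB L_def by (metis append.assoc append_Cons append_Nil)
  from split_list[OF c] obtain P S where xs: "xs = P @ c # S" by blast
  have P: "P \<noteq> []" using ch xs by auto
  have S: "S \<noteq> []" using cl xs by auto
  have dist: "distinct (P @ c # S)" using tx xs by (simp add: tp_def)
  have "last P \<noteq> hd S" using dist P S
    by (metis disjoint_iff distinct_append hd_in_set last_in_set list.set_intros(2))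
  then show ?thesis
  proof (cases "hd S = last B")
    case False
    have "c \<in> set (tpath T E v0 (last S))" using half[OF _ S v0T LG False] tx xs by simp
    then show ?thesis using xs S by simp
  next
    case True
    then have hp: "hd (rev P) \<noteq> last B" using \<open>last P \<noteq> hd S\<close> P by (simp add: hd_rev)
    have "tp (rev S @ c # rev P)" using tx xs tp_rev[of xs] by simp
    then have "c \<in> set (tpath T E v0 (last (rev P)))" using half[OF _ _ v0T LG hp] P by simp
    then show ?thesis using xs P by (simp add: last_rev)
  qed
qed

end

context dt
begin

lemma stepat:
  assumes v': "v' \<in> V" and k: "Suc k < length (tpa v0 v')"
  shows "tpa v0 v' ! k \<in> V \<and> tpa v0 v' ! Suc k \<in> V \<and>
         tpa v0 (tpa v0 v' ! Suc k) = tpa v0 (tpa v0 v' ! k) @ [tpa v0 v' ! Suc k]"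
proof -
  define xs where "xs = tpa v0 v'"
  have v0T: "v0 \<in> V \<union> A" and vT: "v' \<in> V \<union> A" using v0V v' by auto
  have tx: "tp xs" and hx: "hd xs = v0" and lx: "last xs = v'" using tp_tpath[OF v0T vT] xs_def by auto
  have sub: "set xs \<subseteq> V" using all_in_V[OF tx] hx lx v0V v' by simp
  have k': "Suc k < length xs" using k xs_def by simp
  have "xs ! k \<in> V" "xs ! Suc k \<in> V" using sub k' by auto
  moreover have "tpa v0 (xs ! k) = take (Suc k) xs" using tp_prefix[OF tx] k' hx by simp
  moreover have "tpa v0 (xs ! Suc k) = take (Suc (Suc k)) xs" using tp_prefix[OF tx k'] hx by simp
  moreover have "take (Suc (Suc k)) xs = take (Suc k) xs @ [xs ! Suc k]" using take_Suc_conv_app_nth[OF k'] .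
  ultimately show ?thesis using xs_def by simp
qed

lemma chain:
  assumes v': "v' \<in> V" and k: "k < length (tpa v0 v')" and ik: "i \<le> k"
  shows "(N (tpa v0 v' ! i) < 0 \<longrightarrow> N (tpa v0 v' ! k) < 0) \<and>
         (N (tpa v0 v' ! i) \<le> 0 \<longrightarrow> N (tpa v0 v' ! k) \<le> 0)"
  using k ik
proof (induction k)
  case 0
  then show ?case by simp
next
  case (Suc k)
  show ?case
  proof (cases "i = Suc k")
    case True
    then show ?thesis by simp
  next
    case False
    then have ik: "i \<le> k" using Suc.prems by simp
    have IH: "(N (tpa v0 v' ! i) < 0 \<longrightarrow> N (tpa v0 v' ! k) < 0) \<and>
         (N (tpa v0 v' ! i) \<le> 0 \<longrightarrow> N (tpa v0 v' ! k) \<le> 0)" using Suc ik by simp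
    have sa: "tpa v0 v' ! k \<in> V \<and> tpa v0 v' ! Suc k \<in> V \<and>
         tpa v0 (tpa v0 v' ! Suc k) = tpa v0 (tpa v0 v' ! k) @ [tpa v0 v' ! Suc k]"
      using stepat[OF v' Suc.prems(1)] .
    then have "(N (tpa v0 v' ! k) < 0 \<longrightarrow> N (tpa v0 v' ! Suc k) < 0) \<and>
               (N (tpa v0 v' ! k) \<le> 0 \<longrightarrow> N (tpa v0 v' ! Suc k) \<le> 0)"
      using step[of "tpa v0 v' ! k" "tpa v0 v' ! Suc k"] by blast
    then show ?thesis using IH by blast
  qed
qed

lemma part_a:
  assumes vV: "v \<in> V" and v'V: "v' \<in> V" and lt: "tree_less V A E v0 v v'"
  shows "(N v < 0 \<longrightarrow> N v' < 0) \<and> (N v \<le> 0 \<longrightarrow> N v' \<le> 0) \<and>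
         (N v \<le> 0 \<and> (\<exists>\<alpha>\<in>A - A0 A f. tree_less V A E v0 v' \<alpha>) \<longrightarrow> N v' < 0)"
proof -
  define xs where "xs = tpa v0 v'"
  have v0T: "v0 \<in> V \<union> A" and vT: "v' \<in> V \<union> A" using v0V v'V by auto
  have tx: "tp xs" and lx: "last xs = v'" using tp_tpath[OF v0T vT] xs_def by auto
  have ne: "xs \<noteq> []" using tx by (simp add: tp_def)
  have vv: "v \<noteq> v'" and vin: "v \<in> set xs" using lt xs_def by (auto simp: tree_less_def)
  obtain i where i: "i < length xs" and xi: "xs ! i = v" using vin by (metis in_set_conv_nth)
  define n where "n = length xs - 1"
  have xn: "xs ! n = v'" using lx ne n_def by (simp add: last_conv_nth)
  have n: "n < length xs" using ne n_def by simp
  have iN: "i \<le> n" using i n_def by simp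
  have c1: "(N v < 0 \<longrightarrow> N v' < 0) \<and> (N v \<le> 0 \<longrightarrow> N v' \<le> 0)"
    using chain[OF v'V, of n i] n iN xi xn xs_def by simp
  have c3: "N v' < 0" if H: "N v \<le> 0" "\<exists>\<alpha>\<in>A - A0 A f. tree_less V A E v0 v' \<alpha>"
  proof -
    have "i \<noteq> n" using xi xn vv by auto
    then have "i < n" using iN by simp
    define k where "k = n - 1"
    have kn: "n = Suc k" and ik: "i \<le> k" using \<open>i < n\<close> k_def by auto
    have kl: "k < length xs" using n kn by simp
    have "N (xs ! k) \<le> 0" using chain[OF v'V, of k i] kl ik xi H(1) xs_def by simp
    moreover have sa: "xs ! k \<in> V \<and> xs ! Suc k \<in> V \<and> tpa v0 (xs ! Suc k) = tpa v0 (xs ! k) @ [xs ! Suc k]"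
      using stepat[OF v'V] n kn xs_def by simp
    moreover have "\<exists>\<alpha>\<in>A - A0 A f. xs ! Suc k \<in> set (tpa v0 \<alpha>)"
      using H(2) xn kn by (auto simp: tree_less_def)
    ultimately have "N (xs ! Suc k) < 0" using step[of "xs ! k" "xs ! Suc k"] by blast
    then show ?thesis using xn kn by simp
  qed
  show ?thesis using c1 c3 by blast
qed

lemma conn:
  assumes xs: "is_path (V \<union> A) E xs" and h: "hd xs \<in> V" and l: "last xs \<in> V" and c: "c \<in> set xs"
    and cn: "c \<noteq> hd xs" "c \<noteq> last xs"
  shows "c \<in> V \<and> (tree_less V A E v0 c (hd xs) \<or> tree_less V A E v0 c (last xs))"
proof -
  have tx: "tp xs" using xs is_path_tp by simp
  have "c \<in> V" using all_in_V[OF tx h l] c by auto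
  moreover have "c \<in> set (tpa v0 (hd xs)) \<or> c \<in> set (tpa v0 (last xs))"
    using interior[OF tx c cn] v0V by simp
  ultimately show ?thesis using cn by (auto simp: tree_less_def)
qed

end

theorem corollary5p9:
  fixes V A :: "'a set" and E :: "'a set set" and f :: "'a \<Rightarrow> int"
    and q :: "'a set \<Rightarrow> 'a \<Rightarrow> int" and v0 :: 'a
  assumes "decorated_rooted_tree V A E f q v0"
    and "negative_determinants V E q"
    and "\<forall>\<alpha>\<in>A. f \<alpha> \<ge> 0"
  shows "(\<forall>v\<in>V. \<forall>v'\<in>V. tree_less V A E v0 v v' \<longrightarrow>
            (Nval V A E f q v < 0 \<longrightarrow> Nval V A E f q v' < 0) \<and>
            (Nval V A E f q v \<le> 0 \<longrightarrow> Nval V A E f q v' \<le> 0) \<and>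
            (Nval V A E f q v \<le> 0 \<and> (\<exists>\<alpha>\<in>A - A0 A f. tree_less V A E v0 v' \<alpha>)
               \<longrightarrow> Nval V A E f q v' < 0))
       \<and> connected_set (V \<union> A) E {v\<in>V. Nval V A E f q v \<ge> 0}
       \<and> connected_set (V \<union> A) E {v\<in>V. Nval V A E f q v > 0}"
proof -
  have tr: "is_tree (V \<union> A) E" using assms(1) by (simp add: decorated_rooted_tree_def decorated_tree_def)
  interpret dt V A E f q v0
    by (rule dt.intro[OF tr.intro[OF tr]]) (use assms in \<open>simp add: dt_axioms_def\<close>)
  have a: "\<forall>v\<in>V. \<forall>v'\<in>V. tree_less V A E v0 v v' \<longrightarrow>
            (N v < 0 \<longrightarrow> N v' < 0) \<and> (N v \<le> 0 \<longrightarrow> N v' \<le> 0) \<and>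
            (N v \<le> 0 \<and> (\<exists>\<alpha>\<in>A - A0 A f. tree_less V A E v0 v' \<alpha>) \<longrightarrow> N v' < 0)"
    using part_a by blast
  have b: "connected_set (V \<union> A) E {v\<in>V. N v \<ge> 0}"
    unfolding connected_set_def
  proof (intro allI impI subsetI)
    fix xs c assume xs: "is_path (V \<union> A) E xs" and h: "hd xs \<in> {v\<in>V. N v \<ge> 0}"
      and l: "last xs \<in> {v\<in>V. N v \<ge> 0}" and c: "c \<in> set xs"
    show "c \<in> {v\<in>V. N v \<ge> 0}"
    proof (cases "c = hd xs \<or> c = last xs")
      case True
      then show ?thesis using h l by auto
    next
      case False
      then have cc: "c \<in> V \<and> (tree_less V A E v0 c (hd xs) \<or> tree_less V A E v0 c (last xs))"
        using conn[OF xs _ _ c] h l by auto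
      have "N c \<ge> 0"
      proof (rule ccontr)
        assume "\<not> N c \<ge> 0"
        then have "N c < 0" by simp
        then have "N (hd xs) < 0 \<or> N (last xs) < 0" using a cc h l by blast
        then show False using h l by auto
      qed
      then show ?thesis using cc by simp
    qed
  qed
  have c: "connected_set (V \<union> A) E {v\<in>V. N v > 0}"
    unfolding connected_set_def
  proof (intro allI impI subsetI)
    fix xs c assume xs: "is_path (V \<union> A) E xs" and h: "hd xs \<in> {v\<in>V. N v > 0}"
      and l: "last xs \<in> {v\<in>V. N v > 0}" and c: "c \<in> set xs"
    show "c \<in> {v\<in>V. N v > 0}"
    proof (cases "c = hd xs \<or> c = last xs")
      case True
      then show ?thesis using h l by auto
    next
      case False
      then have cc: "c \<in> V \<and> (tree_less V A E v0 c (hd xs) \<or> tree_less V A E v0 c (last xs))"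
        using conn[OF xs _ _ c] h l by auto
      have "N c > 0"
      proof (rule ccontr)
        assume "\<not> N c > 0"
        then have "N c \<le> 0" by simp
        then have "N (hd xs) \<le> 0 \<or> N (last xs) \<le> 0" using a cc h l by blast
        then show False using h l by auto
      qed
      then show ?thesis using cc by simp
    qed
  qed
  show ?thesis using a b c by blast
qed

end
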